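(* Semi-stable semantics is not serialisable: there is no selection function $\alpha$ and termination function $\beta$ such that $\mathrm{sst}(F)=\mathcal{E}^{\alpha,\beta}(F)$ for every abstract argumentation framework $F$.
   Context: An abstract argumentation framework (AF) is a pair $F=(A,R)$ with $A$ a finite subset of a fixed universal set of arguments $\mathfrak{A}$ and $R\subseteq A\times A$ ($a\to b$ means $(a,b)\in R$). For $S\subseteq A$: $S^+=\{a\mid \exists b\in S: b\to a\}$, $S^-=\{a\mid\exists b\in S: a\to b\}$; for sets $S,S'$, $S\to S'$ means $S^+\cap S'\neq\emptyset$. $S$ is admissible if it is conflict-free and every attacker of an element of $S$ is attacked by some element of $S$. A semi-stable extension is an admissible set $E$ such that $E\cup E^+$ is inclusion-maximal among all sets $E'\cup E'^+$ with $E'$ admissible; $\mathrm{sst}(F)$ is the set of semi-stable extensions. An initial set is a non-empty admissible set with no non-empty admissible proper subset; $\mathrm{IS}(F)$ is the set of initial sets. An initial set $S$ is unattacked if $S^-=\emptyset$; unchallenged if $S^-\neq\emptyset$ and no $S'\in\mathrm{IS}(F)$ has $S'\to S$; challenged if some $S'\in\mathrm{IS}(F)$ has $S'\to S$. Write $\mathrm{IS}^{u}(F),\mathrm{IS}^{uc}(F),\mathrm{IS}^{c}(F)$ for these sets. The reduct is $F^S=(A',R\cap(A'\times A'))$ with $A'=A\setminus(S\cup S^+)$. A selection function $\alpha$ maps any three sets $X,Y,Z$ of sets of arguments to a subset of $X\cup Y\cup Z$; a termination function $\beta$ maps pairs $(F,S)$ to $\{0,1\}$. Transitions: $(F,S)\to(F^{S'},S\cup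 S')$ whenever $S'\in\alpha(\mathrm{IS}^u(F),\mathrm{IS}^{uc}(F),\mathrm{IS}^c(F))$. $(F,S)\leadsto^{\alpha,\beta}(F',S')$ means $(F',S')$ is reachable from $(F,S)$ in finitely many (possibly zero) transitions and $\beta(F',S')=1$. $\mathcal{E}^{\alpha,\beta}(F)$ is the set of all $S$ with $(F,\emptyset)\leadsto^{\alpha,\beta}(F',S)$ for some $F'$. A semantics $\sigma$ is serialisable if there exist $\alpha,\beta$ with $\sigma(F)=\mathcal{E}^{\alpha,\beta}(F)$ for all AFs $F$. *)

theory Defs
  imports Main
begin

type_synonym 'a af = "'a set \<times> ('a \<times> 'a) set"

definition is_AF :: "'a af \<Rightarrow> bool" where
  "is_AF F \<longleftrightarrow> finite (fst F) \<and> snd F \<subseteq> fst F \<times> fst F"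

definition plus_set :: "'a af \<Rightarrow> 'a set \<Rightarrow> 'a set" where
  "plus_set F S = {a. \<exists>b\<in>S. (b, a) \<in> snd F}"

definition minus_set :: "'a af \<Rightarrow> 'a set \<Rightarrow> 'a set" where
  "minus_set F S = {a. \<exists>b\<in>S. (a, b) \<in> snd F}"

definition attacks_set :: "'a af \<Rightarrow> 'a set \<Rightarrow> 'a set \<Rightarrow> bool" where
  "attacks_set F S S' \<longleftrightarrow> plus_set F S \<inter> S' \<noteq> {}"

definition conflict_free :: "'a af \<Rightarrow> 'a set \<Rightarrow> bool" where
  "conflict_free F S \<longleftrightarrow> (\<forall>a\<in>S. \<forall>b\<in>S. (a, b) \<notin> snd F)"

definition admissible :: "'a af \<Rightarrow> 'a set \<Rightarrow> bool" where
  "admissible F S \<longleftrightarrow> S \<subseteq> fst F \<and> conflict_free F S \<and>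
     (\<forall>a\<in>S. \<forall>b. (b, a) \<in> snd F \<longrightarrow> (\<exists>c\<in>S. (c, b) \<in> snd F))"

definition sst :: "'a af \<Rightarrow> 'a set set" where
  "sst F = {E. admissible F E \<and>
     (\<forall>E'. admissible F E' \<longrightarrow> \<not> (E \<union> plus_set F E \<subset> E' \<union> plus_set F E'))}"

definition IS :: "'a af \<Rightarrow> 'a set set" where
  "IS F = {S. S \<noteq> {} \<and> admissible F S \<and>
     (\<forall>S'. S' \<noteq> {} \<and> S' \<subset> S \<longrightarrow> \<not> admissible F S')}"

definition IS_u :: "'a af \<Rightarrow> 'a set set" where
  "IS_u F = {S \<in> IS F. minus_set F S = {}}"

definition IS_uc :: "'a af \<Rightarrow> 'a set set" where
  "IS_uc F = {S \<in> IS F. minus_set F S \<noteq> {} \<and> \<not> (\<exists>S'\<in>IS F. attacks_set F S' S)}"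

definition IS_c :: "'a af \<Rightarrow> 'a set set" where
  "IS_c F = {S \<in> IS F. \<exists>S'\<in>IS F. attacks_set F S' S}"

definition reduct :: "'a af \<Rightarrow> 'a set \<Rightarrow> 'a af" where
  "reduct F S = (let A' = fst F - (S \<union> plus_set F S) in (A', snd F \<inter> (A' \<times> A')))"

type_synonym 'a selection = "'a set set \<Rightarrow> 'a set set \<Rightarrow> 'a set set \<Rightarrow> 'a set set"

definition is_selection :: "'a selection \<Rightarrow> bool" where
  "is_selection \<alpha> \<longleftrightarrow> (\<forall>X Y Z. \<alpha> X Y Z \<subseteq> X \<union> Y \<union> Z)"

inductive reach :: "'a selection \<Rightarrow> 'a af \<Rightarrow> 'a set \<Rightarrow> 'a af \<Rightarrow> 'a set \<Rightarrow> bool"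
  for \<alpha> where
  refl: "reach \<alpha> F S F S"
| step: "S' \<in> \<alpha> (IS_u F) (IS_uc F) (IS_c F) \<Longrightarrow> reach \<alpha> (reduct F S') (S \<union> S') F'' S''
          \<Longrightarrow> reach \<alpha> F S F'' S''"

text \<open>Termination functions are rendered as boolean-valued (1 = True).\<close>
definition ext_ser :: "'a selection \<Rightarrow> ('a af \<Rightarrow> 'a set \<Rightarrow> bool) \<Rightarrow> 'a af \<Rightarrow> 'a set set" where
  "ext_ser \<alpha> \<beta> F = {S. \<exists>F'. reach \<alpha> F {} F' S \<and> \<beta> F' S}"

definition serialisable :: "('a af \<Rightarrow> 'a set set) \<Rightarrow> bool" where
  "serialisable \<sigma> \<longleftrightarrow> (\<exists>\<alpha> \<beta>. is_selection \<alpha> \<and> (\<forall>F. is_AF F \<longrightarrow> \<sigma> F = ext_ser \<alpha> \<beta> F))"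

end

theory Submission
  imports Defs
begin

lemma reach_stuck:
  assumes sel: "is_selection \<alpha>" and r: "reach \<alpha> G S F' S''" and e: "IS G = {}"
  shows "F' = G \<and> S'' = S"
  using r
proof (cases rule: reach.cases)
  case refl then show ?thesis by simp
next
  case (step S')
  have "\<alpha> (IS_u G) (IS_uc G) (IS_c G) \<subseteq> {}"
    using sel e unfolding is_selection_def IS_u_def IS_uc_def IS_c_def by force
  with step show ?thesis by blast
qed

lemma subset3_cases:
  assumes "S \<subseteq> {a,b,c}" "c \<notin> S" "\<not> (a \<in> S \<and> b \<in> S)" "S \<noteq> {}"
  shows "S = {a} \<or> S = {b}"
  using assms by blast

theorem theorem9:
  assumes "infinite (UNIV :: 'a set)"
  shows "\<not> serialisable (sst :: 'a af \<Rightarrow> 'a set set)"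
proof
  assume "serialisable (sst :: 'a af \<Rightarrow> 'a set set)"
  then obtain \<alpha> \<beta> where sel: "is_selection \<alpha>"
    and eq: "\<And>F::'a af. is_AF F \<Longrightarrow> sst F = ext_ser \<alpha> \<beta> F"
    unfolding serialisable_def by blast
  obtain a :: 'a where True by simp
  obtain b :: 'a where "b \<noteq> a" using assms
    by (metis ex_new_if_finite finite.emptyI finite_insert insertCI)
  obtain c :: 'a where "c \<noteq> a" "c \<noteq> b" using assms
    by (metis ex_new_if_finite finite.emptyI finite_insert insertCI)
  note d = \<open>b \<noteq> a\<close> \<open>c \<noteq> a\<close> \<open>c \<noteq> b\<close>
  define F1 :: "'a af" where "F1 = ({a,b,c}, {(a,b),(b,a),(b,c),(c,c)})"
  define F2 :: "'a af" where "F2 = ({a,b,c}, {(a,b),(b,a),(c,c)})"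
  define G :: "'a af" where "G = ({c}, {(c,c)})"
  have af1: "is_AF F1" and af2: "is_AF F2" unfolding is_AF_def F1_def F2_def by auto
  have adm1: "admissible F1 S \<longleftrightarrow> S = {} \<or> S = {a} \<or> S = {b}" for S
  proof
    assume h: "admissible F1 S"
    show "S = {} \<or> S = {a} \<or> S = {b}"
    proof (cases "S = {}")
      case False
      have "S \<subseteq> {a,b,c}" "c \<notin> S" "\<not> (a \<in> S \<and> b \<in> S)"
        using h unfolding admissible_def conflict_free_def F1_def by auto
      then show ?thesis using subset3_cases[of S a b c] False by blast
    qed simp
  next
    assume "S = {} \<or> S = {a} \<or> S = {b}"
    then show "admissible F1 S"
      unfolding admissible_def conflict_free_def F1_def using d by auto
  qed
  have adm2: "admissible F2 S \<longleftrightarrow> S = {} \<or> S = {a} \<or> S = {b}" for S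
  proof
    assume h: "admissible F2 S"
    show "S = {} \<or> S = {a} \<or> S = {b}"
    proof (cases "S = {}")
      case False
      have "S \<subseteq> {a,b,c}" "c \<notin> S" "\<not> (a \<in> S \<and> b \<in> S)"
        using h unfolding admissible_def conflict_free_def F2_def by auto
      then show ?thesis using subset3_cases[of S a b c] False by blast
    qed simp
  next
    assume "S = {} \<or> S = {a} \<or> S = {b}"
    then show "admissible F2 S"
      unfolding admissible_def conflict_free_def F2_def using d by auto
  qed
  have IS1: "IS F1 = {{a},{b}}"
    unfolding IS_def adm1 using d by auto
  have IS2: "IS F2 = {{a},{b}}"
    unfolding IS_def adm2 using d by auto
  have att1: "attacks_set F1 {a} {b}" "attacks_set F1 {b} {a}"
    unfolding attacks_set_def plus_set_def F1_def by auto
  have att2: "attacks_set F2 {a} {b}" "attacks_set F2 {b} {a}"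
    unfolding attacks_set_def plus_set_def F2_def by auto
  have T1: "IS_u F1 = {}" "IS_uc F1 = {}" "IS_c F1 = {{a},{b}}"
    unfolding IS_u_def IS_uc_def IS_c_def IS1 minus_set_def
    using att1 d by (auto simp: F1_def)
  have T2: "IS_u F2 = {}" "IS_uc F2 = {}" "IS_c F2 = {{a},{b}}"
    unfolding IS_u_def IS_uc_def IS_c_def IS2 minus_set_def
    using att2 d by (auto simp: F2_def)
  have ISG: "IS G = {}"
    unfolding IS_def admissible_def conflict_free_def G_def by auto
  have p1: "plus_set F1 {a} = {b}" "plus_set F1 {b} = {a,c}"
    unfolding plus_set_def F1_def using d by auto
  have p2: "plus_set F2 {a} = {b}" "plus_set F2 {b} = {a}"
    unfolding plus_set_def F2_def using d by auto
  have r1: "reduct F1 {a} = G"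
    unfolding reduct_def Let_def p1 by (auto simp: F1_def G_def d)
  have r2: "reduct F2 {a} = G" "reduct F2 {b} = G"
    unfolding reduct_def Let_def p2 by (auto simp: F2_def G_def d)
  have red2: "reduct F2 S = G" if "S \<in> {{a},{b}}" for S
    using that r2 by blast
  have pe2: "plus_set F2 {} = {}" unfolding plus_set_def by auto
  have "{a} \<in> sst F2"
  proof -
    have "\<not> ({a} \<union> plus_set F2 {a} \<subset> E' \<union> plus_set F2 E')" if "admissible F2 E'" for E'
      using that unfolding adm2 using p2 pe2 d by auto
    then show ?thesis unfolding sst_def using adm2 by blast
  qed
  then have "{a} \<in> ext_ser \<alpha> \<beta> F2" using eq[OF af2] by simp
  then obtain F' where r: "reach \<alpha> F2 {} F' {a}" and bt: "\<beta> F' {a}"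
    unfolding ext_ser_def by blast
  have "{a} \<in> \<alpha> {} {} {{a},{b}} \<and> \<beta> G {a}"
    using r
  proof (cases rule: reach.cases)
    case refl then show ?thesis by simp
  next
    case (step S')
    have S'in: "S' \<in> {{a},{b}}" using step(1) sel T2 unfolding is_selection_def by blast
    have "F' = G \<and> {a} = {} \<union> S'"
      using reach_stuck[OF sel _ ISG] step(2) red2[OF S'in] by metis
    then show ?thesis using step(1) T2 bt by simp
  qed
  then have "reach \<alpha> F1 {} G {a}" "\<beta> G {a}"
    using reach.step[of "{a}" \<alpha> F1 "{}" G "{a}"] reach.refl[of \<alpha> G "{a}"] T1 r1
    by auto
  then have "{a} \<in> ext_ser \<alpha> \<beta> F1" unfolding ext_ser_def by blast
  then have "{a} \<in> sst F1" using eq[OF af1] by simp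
  moreover have "{a} \<notin> sst F1"
  proof -
    have "{a} \<union> plus_set F1 {a} \<subset> {b} \<union> plus_set F1 {b}"
      unfolding plus_set_def F1_def using d by auto
    then show ?thesis unfolding sst_def using adm1 by blast
  qed
  ultimately show False by blast
qed

end
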